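(* For every integer $p>1$ and every $N\in\mathbb N$, the group $\mathrm{GL}_{p-rec}(\mathbb C)$ contains an element $G$ of complexity $2$ whose inverse $G^{-1}$ has complexity $\ge N$.
   Context: $\mathcal M_{p\times p}$ is the monoid of pairs $(U,W)$ of words of common length over $\{0,\dots,p-1\}$ (concatenation). For $A:\mathcal M_{p\times p}\to\mathbb C$ (values $A[U,W]$), shift maps act by $(\rho(S,T)A)[U,W]=A[US,WT]$; the complexity of $A$ is the dimension of the linear span of $\{\rho(S,T)A\}$, and $\mathrm{Rec}_{p\times p}(\mathbb C)$ is the set of $A$ of finite complexity. It is an algebra for the product $(AB)[U,W]=\sum_{V\in\{0,\dots,p-1\}^l}A[U,V]B[V,W]$ ($(U,W)$ of length $l$), with identity $\mathrm{Id}[U,W]=1$ if $U=W$ and $0$ otherwise. $\mathrm{GL}_{p-rec}(\mathbb C)$ is the group of elements of $\mathrm{Rec}_{p\times p}(\mathbb C)$ invertible in $\mathrm{Rec}_{p\times p}(\mathbb C)$. *)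

theory Defs
  imports "HOL-Analysis.Analysis" "HOL-Library.Function_Algebras"
begin

text \<open>Functions on the monoid M_{p x p}: pairs (U,W) of words of common length over
  the alphabet {0,...,p-1}. Words are nat lists; values outside the monoid are junk and
  are ignored (all notions below only look at values on the monoid).\<close>

type_synonym pmat = "nat list \<Rightarrow> nat list \<Rightarrow> complex"

definition inM :: "nat \<Rightarrow> nat list \<Rightarrow> nat list \<Rightarrow> bool" where
  "inM p U W \<longleftrightarrow> length U = length W \<and> set U \<subseteq> {..<p} \<and> set W \<subseteq> {..<p}"

definition restr :: "nat \<Rightarrow> pmat \<Rightarrow> pmat" where
  "restr p A = (\<lambda>U W. if inM p U W then A U W else 0)"

definition shift :: "nat list \<Rightarrow> nat list \<Rightarrow> pmat \<Rightarrow> pmat" where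
  "shift S T A = (\<lambda>U W. A (U @ S) (W @ T))"

definition shifts :: "nat \<Rightarrow> pmat \<Rightarrow> pmat set" where
  "shifts p A = {restr p (shift S T A) | S T. inM p S T}"

definition cscale :: "complex \<Rightarrow> pmat \<Rightarrow> pmat" where
  "cscale c A = (\<lambda>U W. c * A U W)"

definition complexity :: "nat \<Rightarrow> pmat \<Rightarrow> nat" where
  "complexity p A = vector_space.dim cscale (shifts p A)"

definition isRec :: "nat \<Rightarrow> pmat \<Rightarrow> bool" where
  "isRec p A \<longleftrightarrow> (\<exists>B. finite B \<and> shifts p A \<subseteq> module.span cscale B)"

definition pmult :: "nat \<Rightarrow> pmat \<Rightarrow> pmat \<Rightarrow> pmat" where
  "pmult p A B = (\<lambda>U W. \<Sum>V\<in>{V. length V = length U \<and> set V \<subseteq> {..<p}}. A U V * B V W)"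

definition pId :: "pmat" where
  "pId = (\<lambda>U W. if U = W then 1 else 0)"

definition isInverse :: "nat \<Rightarrow> pmat \<Rightarrow> pmat \<Rightarrow> bool" where
  "isInverse p G H \<longleftrightarrow> isRec p G \<and> isRec p H \<and>
     restr p (pmult p G H) = restr p pId \<and> restr p (pmult p H G) = restr p pId"

end

theory Submission
  imports Defs
begin

interpretation pm: vector_space cscale
  by unfold_locales (auto simp: cscale_def fun_eq_iff algebra_simps)

definition zeta :: "nat \<Rightarrow> complex" where
  "zeta M = exp (2 * of_real pi * \<i> / of_nat M)"

lemma zeta_pow: "zeta M ^ j = exp(2 * of_real pi * \<i> * of_nat j / of_nat M)"
  unfolding zeta_def by (metis exp_of_nat_mult mult.commute times_divide_eq_right)

lemma zeta_pow_eq_1: "M \<ge> 1 \<Longrightarrow> zeta M ^ j = 1 \<longleftrightarrow> M dvd j"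
  by (simp add: zeta_pow complex_root_unity_eq_1)

lemma zeta_M: "M \<ge> 1 \<Longrightarrow> zeta M ^ M = 1"
  by (simp add: zeta_pow_eq_1)

lemma zeta_ne_1: "M \<ge> 2 \<Longrightarrow> zeta M \<noteq> 1"
  using zeta_pow_eq_1[of M 1] by auto

lemma zeta_nz: "zeta M \<noteq> 0"
  by (simp add: zeta_def)

lemma zeta_norm: "norm (zeta M ^ j) = 1"
  by (simp add: zeta_def norm_power)

lemma zeta_mod: "M \<ge> 1 \<Longrightarrow> zeta M ^ (l + m) = zeta M ^ (l + m mod M)"
proof -
  assume M: "M \<ge> 1"
  have "zeta M ^ (l + m) = zeta M ^ (l + m mod M) * (zeta M ^ M) ^ (m div M)"
    by (metis add.assoc mod_div_mult_eq power_add power_mult add.commute mult.commute)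
  then show ?thesis using zeta_M[OF M] by simp
qed

lemma orth:
  assumes M: "M \<ge> 1" and r: "r < M" and s: "s < M"
  shows "(\<Sum>l<M. zeta M ^ (r*l) * zeta M ^ ((M-s)*l)) = (if r = s then of_nat M else 0)"
proof -
  define w where "w = zeta M ^ (r + (M - s))"
  have eq: "(\<Sum>l<M. zeta M ^ (r*l) * zeta M ^ ((M-s)*l)) = (\<Sum>l<M. w ^ l)"
    unfolding w_def by (intro sum.cong refl) (simp add: power_mult[symmetric] power_add[symmetric] algebra_simps)
  show ?thesis
  proof (cases "r = s")
    case True
    then have "w = 1" using M s unfolding w_def by (simp add: zeta_M)
    then show ?thesis using eq True by simp
  next
    case False
    have "\<not> M dvd (r + (M - s))"
    proof
      assume d: "M dvd r + (M - s)"
      have "0 < r + (M - s)" "r + (M - s) < 2 * M" "r + (M - s) \<noteq> M" using r s False by auto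
      moreover obtain q where q: "r + (M - s) = M * q" using d by (elim dvdE)
      ultimately show False
        by (cases q; cases "q - 1") (auto simp: algebra_simps)
    qed
    then have w1: "w \<noteq> 1" using zeta_pow_eq_1[OF M] unfolding w_def by simp
    have wM: "w ^ M = 1" unfolding w_def using zeta_M[OF M]
      by (metis mult.commute power_mult power_one)
    show ?thesis using eq False geometric_sum[OF w1, of M] wM by simp
  qed
qed

definition SS :: "nat \<Rightarrow> nat \<Rightarrow> complex" where
  "SS M l = (\<Sum>r<M. (1/2)^r * zeta M ^ (r*l))"

lemma stepB:
  assumes M: "M \<ge> 1" and A: "\<And>l. (\<Sum>k<M. c k * SS M (l+k)) = 0" and s: "s < M"
  shows "(\<Sum>k<M. c k * zeta M ^ (s*k)) = 0"
proof -
  let ?z = "zeta M"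
  have "0 = (\<Sum>l<M. ?z ^ ((M-s)*l) * (\<Sum>k<M. c k * SS M (l+k)))"
    using A by simp
  also have "\<dots> = (\<Sum>l<M. \<Sum>k<M. \<Sum>r<M. c k * ((1/2)^r * ?z ^ (r*k)) * (?z ^ (r*l) * ?z ^ ((M-s)*l)))"
    unfolding SS_def sum_distrib_left
    by (intro sum.cong refl) (simp add: add_mult_distrib2 power_add mult_ac)
  also have "\<dots> = (\<Sum>k<M. \<Sum>l<M. \<Sum>r<M. c k * ((1/2)^r * ?z ^ (r*k)) * (?z ^ (r*l) * ?z ^ ((M-s)*l)))"
    by (rule sum.swap)
  also have "\<dots> = (\<Sum>k<M. \<Sum>r<M. \<Sum>l<M. c k * ((1/2)^r * ?z ^ (r*k)) * (?z ^ (r*l) * ?z ^ ((M-s)*l)))"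
    by (rule sum.cong[OF refl], rule sum.swap)
  also have "\<dots> = (\<Sum>k<M. \<Sum>r<M. c k * ((1/2)^r * ?z ^ (r*k)) * (if r = s then of_nat M else 0))"
    by (simp add: sum_distrib_left[symmetric] orth[OF M _ s])
  also have "\<dots> = (\<Sum>k<M. c k * ((1/2)^s * ?z ^ (s*k)) * of_nat M)"
    using s by (simp add: if_distrib cong: if_cong)
  also have "\<dots> = (1/2)^s * of_nat M * (\<Sum>k<M. c k * ?z ^ (s*k))"
    by (simp add: sum_distrib_left algebra_simps)
  finally show ?thesis using M by simp
qed

lemma stepC:
  assumes M: "M \<ge> 1" and B: "\<And>s. s < M \<Longrightarrow> (\<Sum>k<M. c k * zeta M ^ (s*k)) = 0" and j: "j < M"
  shows "c j = 0"
proof -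
  let ?z = "zeta M"
  have "0 = (\<Sum>t<M. ?z ^ ((M-j)*t) * (\<Sum>k<M. c k * ?z ^ (t*k)))"
    using B by simp
  also have "\<dots> = (\<Sum>t<M. \<Sum>k<M. c k * (?z ^ (k*t) * ?z ^ ((M-j)*t)))"
    by (simp add: sum_distrib_left algebra_simps)
  also have "\<dots> = (\<Sum>k<M. \<Sum>t<M. c k * (?z ^ (k*t) * ?z ^ ((M-j)*t)))"
    by (rule sum.swap)
  also have "\<dots> = (\<Sum>k<M. c k * (if k = j then of_nat M else 0))"
    by (simp add: sum_distrib_left[symmetric] orth[OF M _ j])
  also have "\<dots> = c j * of_nat M"
    using j by (simp add: if_distrib cong: if_cong)
  finally show ?thesis using M by simp
qed


definition hH :: "nat \<Rightarrow> nat \<Rightarrow> complex" where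
  "hH M l = SS M l / (1 - 1/2^M)"

lemma K_nz: "M \<ge> 1 \<Longrightarrow> (1 - 1/2^M :: complex) \<noteq> 0"
proof
  assume "M \<ge> 1" "(1 - 1/2^M :: complex) = 0"
  then have "(2::complex)^M = 1" by (simp add: field_simps)
  then have "(2::real)^M = 1" by (metis of_real_eq_1_iff of_real_numeral of_real_power)
  with \<open>M \<ge> 1\<close> one_less_power[of "2::real" M] show False by simp
qed

lemma SS_geom: "SS M l = (\<Sum>r<M. (zeta M ^ l / 2) ^ r)"
  unfolding SS_def by (intro sum.cong refl) (simp add: power_mult_distrib power_divide power_mult[symmetric] mult.commute field_simps)

lemma gh_one: assumes M: "M \<ge> 1" shows "(1 - zeta M ^ l / 2) * hH M l = 1"
proof -
  have "(1 - zeta M ^ l / 2) * SS M l = 1 - (zeta M ^ l / 2) ^ M"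
    unfolding SS_geom by (simp add: one_diff_power_eq)
  also have "(zeta M ^ l / 2) ^ M = 1 / 2^M"
    using zeta_M[OF M] by (simp add: power_divide power_mult[symmetric] mult.commute power_mult)
  finally show ?thesis unfolding hH_def using K_nz[OF M] by simp
qed

lemma hH_scalar:
  assumes M: "M \<ge> 1" and A: "\<And>l. (\<Sum>k<M. c k * hH M (l+k)) = 0" and j: "j < M"
  shows "c j = 0"
proof -
  have "\<And>l. (\<Sum>k<M. c k * SS M (l+k)) = 0"
  proof -
    fix l
    have "(\<Sum>k<M. c k * hH M (l+k)) = (\<Sum>k<M. c k * SS M (l+k)) / (1 - 1/2^M)"
      unfolding hH_def by (simp add: sum_divide_distrib)
    then show "(\<Sum>k<M. c k * SS M (l+k)) = 0" using A[of l] K_nz[OF M] by simp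
  qed
  then show ?thesis using stepC[OF M stepB[OF M] j] by blast
qed

lemma hH_mod: assumes M: "M \<ge> 1" shows "hH M (l + m) = hH M (l + m mod M)"
proof -
  have e: "zeta M ^ (l + m) = zeta M ^ (l + m mod M)" by (rule zeta_mod[OF M])
  show ?thesis unfolding hH_def SS_geom e ..
qed

definition gG :: "nat \<Rightarrow> pmat" where
  "gG M = (\<lambda>U W. if U = W then 1 - zeta M ^ length U / 2 else 0)"

definition gH :: "nat \<Rightarrow> pmat" where
  "gH M = (\<lambda>U W. if U = W then hH M (length U) else 0)"

lemma app_eq: "inM p U W \<Longrightarrow> inM p S T \<Longrightarrow> (U @ S = W @ T) \<longleftrightarrow> (U = W \<and> S = T)"
  unfolding inM_def by (simp add: append_eq_append_conv)

lemma shift_G: "inM p S T \<Longrightarrow> restr p (shift S T (gG M)) =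
   (if S = T then restr p (\<lambda>U W. if U = W then 1 - zeta M ^ (length U + length S) / 2 else 0) else 0)"
  by (auto simp: restr_def shift_def fun_eq_iff gG_def app_eq)

lemma shift_H: "inM p S T \<Longrightarrow> restr p (shift S T (gH M)) =
   (if S = T then restr p (\<lambda>U W. if U = W then hH M (length U + length S) else 0) else 0)"
  by (auto simp: restr_def shift_def fun_eq_iff gH_def app_eq)

lemma sum_app2: "(sum F A) U W = (\<Sum>a\<in>A. F a U W)"
  by (induction A rule: infinite_finite_induct) auto

lemma cscale_app: "cscale c X U W = c * X U W"
  by (simp add: cscale_def)

lemma finVs: "finite {V. length V = n \<and> set V \<subseteq> {..<p::nat}}"
proof -
  have "{V. length V = n \<and> set V \<subseteq> {..<p::nat}} = {V. set V \<subseteq> {..<p} \<and> length V = n}" by auto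
  then show ?thesis using finite_lists_length_eq[of "{..<p}" n] by simp
qed

lemma pmult_diag:
  assumes "inM p U W"
  shows "pmult p (\<lambda>U W. if U = W then a (length U) else 0) (\<lambda>U W. if U = W then b (length U) else 0) U W
     = (if U = W then a (length U) * b (length U) else 0)"
proof -
  have U: "U \<in> {V. length V = length U \<and> set V \<subseteq> {..<p}}" using assms by (simp add: inM_def)
  have "pmult p (\<lambda>U W. if U = W then a (length U) else 0) (\<lambda>U W. if U = W then b (length U) else 0) U W
     = (\<Sum>V\<in>{V. length V = length U \<and> set V \<subseteq> {..<p}}. if V = U then (if U = W then a (length U) * b (length U) else 0) else 0)"
    unfolding pmult_def by (intro sum.cong refl) auto
  also have "\<dots> = (if U = W then a (length U) * b (length U) else 0)"
    using U finVs by (simp add: sum.delta')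
  finally show ?thesis .
qed


lemma restr_app: "restr p A U W = (if inM p U W then A U W else 0)"
  by (simp add: restr_def)

lemma inM_rep: "0 < p \<Longrightarrow> inM p (replicate l 0) (replicate l 0)"
  by (auto simp: inM_def set_replicate_conv_if)

lemma inverse_GH:
  assumes M: "M \<ge> 1"
  shows "restr p (pmult p (gG M) (gH M)) = restr p pId \<and> restr p (pmult p (gH M) (gG M)) = restr p pId"
proof -
  have P1: "pmult p (gG M) (gH M) U W = (if U = W then 1 else 0)" if "inM p U W" for U W
    using pmult_diag[OF that, of "\<lambda>l. 1 - zeta M ^ l / 2" "hH M"] gh_one[OF M]
    unfolding gG_def gH_def by simp
  have P2: "pmult p (gH M) (gG M) U W = (if U = W then 1 else 0)" if "inM p U W" for U W
    using pmult_diag[OF that, of "hH M" "\<lambda>l. 1 - zeta M ^ l / 2"] gh_one[OF M]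
    unfolding gG_def gH_def by (simp add: mult.commute)
  show ?thesis
    using P1 P2 by (auto simp: fun_eq_iff restr_def pId_def)
qed


context
  fixes p M :: nat
  assumes p: "p > 1" and M: "M \<ge> 2"
begin

definition "v1 = restr p (gG M)"
definition "v2 = restr p (shift [0] [0] (gG M))"

lemma M1: "M \<ge> 1" using M by simp

lemma z1: "zeta M \<noteq> 1" using zeta_ne_1[OF M] .

lemma inM0: "inM p [0] [0]" using p by (simp add: inM_def)
lemma inMe: "inM p [] []" by (simp add: inM_def)

lemma v1_app: "v1 U W = (if inM p U W \<and> U = W then 1 - zeta M ^ length U / 2 else 0)"
  by (auto simp: v1_def restr_def gG_def)

lemma v2_app: "v2 U W = (if inM p U W \<and> U = W then 1 - zeta M ^ (length U + 1) / 2 else 0)"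
  unfolding v2_def shift_G[OF inM0] by (auto simp: restr_def)

lemma v12_in: "{v1, v2} \<subseteq> shifts p (gG M)"
proof -
  have "v1 = restr p (shift [] [] (gG M))" by (simp add: v1_def shift_def)
  then have "v1 \<in> shifts p (gG M)" unfolding shifts_def using inMe by blast
  moreover have "v2 \<in> shifts p (gG M)" unfolding shifts_def v2_def using inM0 by blast
  ultimately show ?thesis by simp
qed

lemma shiftsG_span: "shifts p (gG M) \<subseteq> pm.span {v1, v2}"
proof
  fix X assume "X \<in> shifts p (gG M)"
  then obtain S T where ST: "inM p S T" and X: "X = restr p (shift S T (gG M))"
    unfolding shifts_def by blast
  show "X \<in> pm.span {v1, v2}"
  proof (cases "S = T")
    case False
    then show ?thesis using X shift_G[OF ST] pm.span_zero by simp
  next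
    case True
    define m where "m = length S"
    define b where "b = (zeta M ^ m - 1) / (zeta M - 1)"
    define a where "a = 1 - b"
    have bz: "b * (zeta M - 1) = zeta M ^ m - 1" using z1 by (simp add: b_def)
    have ab: "a + b * zeta M = zeta M ^ m" using bz unfolding a_def
      by (simp add: algebra_simps)
    have "X = cscale a v1 + cscale b v2"
    proof (intro ext)
      fix U W :: "nat list"
      have "(1 - zeta M ^ length U / 2) * a + (1 - zeta M ^ (length U + 1) / 2) * b
            = 1 - zeta M ^ (length U + m) / 2"
      proof -
        have "(1 - zeta M ^ length U / 2) * a + (1 - zeta M ^ (length U + 1) / 2) * b
            = (a + b) - zeta M ^ length U * (a + b * zeta M) / 2"
          by (simp add: algebra_simps)
        also have "\<dots> = 1 - zeta M ^ (length U + m) / 2"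
          using ab by (simp add: a_def power_add)
        finally show ?thesis .
      qed
      moreover have "X U W = (if inM p U W \<and> U = W then 1 - zeta M ^ (length U + m) / 2 else 0)"
        using True X shift_G[OF ST] by (auto simp: m_def restr_def)
      ultimately show "X U W = (cscale a v1 + cscale b v2) U W"
        by (cases "inM p U W \<and> U = W") (auto simp: cscale_app v1_app v2_app mult.commute)
    qed
    then show ?thesis
      by (simp add: pm.span_add pm.span_scale pm.span_base)
  qed
qed

lemma v1_ne_v2: "v1 \<noteq> v2"
proof
  assume "v1 = v2"
  then have "v1 [] [] = v2 [] []" by simp
  then have "(1::complex) / 2 = 1 - zeta M / 2" by (simp add: v1_app v2_app inMe)
  then have "zeta M = 1" by (simp add: field_simps)
  then show False using z1 by simp
qed

lemma z2: "zeta M \<noteq> 2"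
proof
  assume "zeta M = 2"
  then have "norm (zeta M ^ 1) = 2" by simp
  then show False using zeta_norm[of M 1] by simp
qed

lemma indep_v12: "pm.independent {v1, v2}"
proof -
  have v2nz: "v2 \<noteq> 0"
  proof
    assume "v2 = 0"
    then have "v2 [] [] = 0" by simp
    then have "zeta M = 2" by (simp add: v2_app inMe field_simps)
    then show False using z2 by simp
  qed
  have i2: "pm.independent {v2}"
    using pm.independent_insertI[of v2 "{}"] v2nz by (simp add: pm.span_empty pm.independent_empty)
  have "v1 \<notin> pm.span {v2}"
  proof
    assume "v1 \<in> pm.span {v2}"
    then obtain k where k: "v1 = cscale k v2" by (auto simp: pm.span_singleton)
    have e1: "v1 [] [] = k * v2 [] []" using k by (simp add: cscale_app)
    have e2: "v1 [0] [0] = k * v2 [0] [0]" using k by (simp add: cscale_app)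
    let ?z = "zeta M"
    have e1': "1 = k * (2 - ?z)" using e1 by (simp add: v1_app v2_app inMe field_simps)
    have e2': "2 - ?z = k * (2 - ?z^2)" using e2
      apply (simp add: v1_app v2_app inM0 field_simps power2_eq_square)
      apply algebra
      done
    have "(2 - ?z) * (2 - ?z) = (2 - ?z) * (k * (2 - ?z^2))" using e2' by simp
    also have "\<dots> = (k * (2 - ?z)) * (2 - ?z^2)" by (simp add: algebra_simps)
    also have "\<dots> = 2 - ?z^2" using e1' by simp
    finally have eq: "(2 - ?z) * (2 - ?z) = (2 - ?z^2)" .
    have "2 * (?z - 1)^2 = (2 - ?z) * (2 - ?z) - (2 - ?z^2)" by (simp add: algebra_simps power2_eq_square)
    then have "(?z - 1)^2 = 0" using eq by simp
    then show False using z1 by simp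
  qed
  then show ?thesis using i2 v1_ne_v2 by (simp add: pm.independent_insert)
qed

lemma complexity_G: "complexity p (gG M) = 2"
proof -
  have "pm.dim (shifts p (gG M)) = card {v1, v2}"
    by (rule pm.dim_unique[OF v12_in shiftsG_span indep_v12 refl])
  also have "\<dots> = 2" using v1_ne_v2 by simp
  finally show ?thesis unfolding complexity_def .
qed

lemma isRec_G: "isRec p (gG M)"
  unfolding isRec_def by (intro exI[of _ "{v1, v2}"] conjI shiftsG_span) simp

end


context
  fixes p M :: nat
  assumes p: "p > 1" and M: "M \<ge> 1"
begin

definition "E k = restr p (shift (replicate k 0) (replicate k 0) (gH M))"

lemma inMr: "inM p (replicate k 0) (replicate k 0)" using p by (auto simp: inM_def set_replicate_conv_if)

lemma E_eq: "E k = restr p (\<lambda>U W. if U = W then hH M (length U + k) else 0)"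
  unfolding E_def shift_H[OF inMr] by (simp add: fun_eq_iff restr_def)

lemma E_app: "E k (replicate l 0) (replicate l 0) = hH M (l + k)"
  unfolding E_eq using inMr[of l] by (simp add: restr_def)

lemma E_mod: "E k = E (k mod M)"
  unfolding E_eq using hH_mod[OF M] by metis

lemma E_in: "E ` {..<M} \<subseteq> shifts p (gH M)"
  unfolding shifts_def E_def using inMr by blast

lemma shiftsH_span: "shifts p (gH M) \<subseteq> pm.span (E ` {..<M})"
proof
  fix X assume "X \<in> shifts p (gH M)"
  then obtain S T where ST: "inM p S T" and X: "X = restr p (shift S T (gH M))"
    unfolding shifts_def by blast
  show "X \<in> pm.span (E ` {..<M})"
  proof (cases "S = T")
    case False
    then show ?thesis using X shift_H[OF ST] pm.span_zero by simp
  next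
    case True
    have "X = restr p (\<lambda>U W. if U = W then hH M (length U + length S) else 0)"
      using X shift_H[OF ST] True by simp
    then have "X = E (length S)" by (simp add: E_eq)
    also have "\<dots> = E (length S mod M)" by (rule E_mod)
    finally have "X \<in> E ` {..<M}" using M by simp
    then show ?thesis by (rule pm.span_base)
  qed
qed

lemma E_inj: "inj_on E {..<M}"
proof (rule inj_onI)
  fix a b assume a: "a \<in> {..<M}" and b: "b \<in> {..<M}" and eq: "E a = E b"
  show "a = b"
  proof (rule ccontr)
    assume ne: "a \<noteq> b"
    define c where "c k = (if k = a then 1 else 0) - (if k = b then (1::complex) else 0)" for k
    have "\<And>l. (\<Sum>k<M. c k * hH M (l+k)) = 0"
    proof -
      fix l
      have pw: "c k * hH M (l+k) = (if k = a then hH M (l+k) else 0) - (if k = b then hH M (l+k) else 0)" for k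
        unfolding c_def using ne by auto
      have "(\<Sum>k<M. c k * hH M (l+k)) = (\<Sum>k<M. (if k = a then hH M (l+k) else 0)) - (\<Sum>k<M. (if k = b then hH M (l+k) else 0))"
        unfolding pw by (rule sum_subtractf)
      also have "\<dots> = hH M (l+a) - hH M (l+b)" using a b by simp
      also have "\<dots> = 0" using E_app[of a l] E_app[of b l] eq by simp
      finally show "(\<Sum>k<M. c k * hH M (l+k)) = 0" .
    qed
    then have "c a = 0" using hH_scalar[OF M, of c] a by blast
    then show False using ne by (simp add: c_def)
  qed
qed

lemma E_indep: "pm.independent (E ` {..<M})"
proof (rule pm.independent_if_scalars_zero)
  show "finite (E ` {..<M})" by simp
next
  fix f x assume sum0: "(\<Sum>x\<in>E ` {..<M}. cscale (f x) x) = 0" and x: "x \<in> E ` {..<M}"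
  have s2: "(\<Sum>k<M. cscale (f (E k)) (E k)) = 0"
    using sum0 by (simp add: sum.reindex[OF E_inj])
  have "\<And>l. (\<Sum>k<M. f (E k) * hH M (l+k)) = 0"
  proof -
    fix l
    have "(\<Sum>k<M. cscale (f (E k)) (E k)) (replicate l 0) (replicate l 0) = 0" using s2 by simp
    then show "(\<Sum>k<M. f (E k) * hH M (l+k)) = 0"
      by (simp add: sum_app2 cscale_app E_app)
  qed
  then have "\<And>k. k < M \<Longrightarrow> f (E k) = 0" using hH_scalar[OF M, of "\<lambda>k. f (E k)"] by blast
  then show "f x = 0" using x by auto
qed

lemma complexity_H: "complexity p (gH M) = M"
proof -
  have "pm.dim (shifts p (gH M)) = card (E ` {..<M})"
    by (rule pm.dim_unique[OF E_in shiftsH_span E_indep refl])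
  also have "\<dots> = M" using E_inj by (simp add: card_image)
  finally show ?thesis unfolding complexity_def .
qed

lemma isRec_H: "isRec p (gH M)"
  unfolding isRec_def by (intro exI[of _ "E ` {..<M}"] conjI shiftsH_span) simp

end

theorem mainTheorem12:
  fixes p N :: nat
  assumes "p > 1"
  shows "\<exists>G H. isInverse p G H \<and> complexity p G = 2 \<and> complexity p H \<ge> N"
proof (intro exI conjI)
  let ?M = "N + 2"
  have M1: "?M \<ge> 1" and M2: "?M \<ge> 2" by auto
  show "isInverse p (gG ?M) (gH ?M)"
    unfolding isInverse_def
    using isRec_G[OF assms M2] isRec_H[OF assms M1] inverse_GH[OF M1] by blast
  show "complexity p (gG ?M) = 2" by (rule complexity_G[OF assms M2])
  show "complexity p (gH ?M) \<ge> N" using complexity_H[OF assms M1] by simp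
qed

end
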